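(* Let $M$ be a smooth manifold and $(\mathbf{J}_1^t,\mathbf{J}_2^t)$ a canonical family of generalized Kähler structures, with associated bihermitian data $(g_t,b_t,I_t,J_t)$. Then for all $t$, $I^t\equiv I^0$ and $\sigma^t\equiv\sigma^0$, where $\sigma^t=\tfrac12[I_t,J_t]g_t^{-1}$.
   Context: A generalized Kähler structure is a pair of commuting integrable generalized complex structures $(\mathbf{J}_1,\mathbf{J}_2)$ on $T\oplus T^*$ (with $H$-twisted Courant bracket and neutral pairing $\langle X+\xi,Y+\eta\rangle=\tfrac12(\xi(Y)+\eta(X))$) with $\langle -\mathbf{J}_1\mathbf{J}_2\cdot,\cdot\rangle>0$; it corresponds to bihermitian data $(g,b,I,J)$ via the Gualtieri map $\mathbf{J}_{1/2}=\tfrac12 e^b\begin{pmatrix} I\pm J & -(\omega_I^{-1}\mp\omega_J^{-1})\\ \omega_I\mp\omega_J & -(I^*\pm J^* )\end{pmatrix}e^{-b}$, $\omega_I=gI$, $\omega_J=gJ$ as maps $T\to T^*$. For a 2-form $K$, $e^K(X+\xi)=X+\xi+K(X,\cdot)$ and $\Phi_K(\mathbf{J})=[\mathbf{J},e^K\mathbf{J}]$. A canonical family is a one-parameter family of generalized Kähler structures with $\partial_t\mathbf{J}_i^t=\Phi_{K_t}(\mathbf{J}_i^t)$, $i=1,2$, for some family of real 2-forms $K_t$. The tensor $\sigma=\tfrac12[I,J]g^{-1}$ is a bivector (map $T^*\to T$). *)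

theory Defs
  imports "HOL-Analysis.Analysis"
begin

text \<open>Pointwise (fibrewise) linear algebra on the generalized tangent space
  T + T* of an n-dimensional manifold, with T trivialised as real^'n and T* identified
  with real^'n via the dual basis.  An endomorphism of T + T* is a 2x2 block operator
  (A, B, C, D) = [[A, B], [C, D]] with A : T -> T, B : T* -> T, C : T -> T*, D : T* -> T*.
  A map T -> T* (metric g, 2-form b, omega = g I) is a matrix M with M *v X = M(X, .).
  The dual I^* : T* -> T* of I : T -> T is transpose I.\<close>

type_synonym 'n gend = "(real^'n^'n) \<times> (real^'n^'n) \<times> (real^'n^'n) \<times> (real^'n^'n)"

definition gmult :: "('n::finite) gend \<Rightarrow> 'n gend \<Rightarrow> 'n gend" where
  "gmult P Q = (case P of (A, B, C, D) \<Rightarrow> (case Q of (A', B', C', D') \<Rightarrow>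
     (A ** A' + B ** C', A ** B' + B ** D', C ** A' + D ** C', C ** B' + D ** D')))"

definition gid :: "('n::finite) gend" where
  "gid = (mat 1, 0, 0, mat 1)"

definition gapp :: "('n::finite) gend \<Rightarrow> (real^'n) \<times> (real^'n) \<Rightarrow> (real^'n) \<times> (real^'n)" where
  "gapp P u = (case P of (A, B, C, D) \<Rightarrow> (case u of (X, \<xi>) \<Rightarrow>
     (A *v X + B *v \<xi>, C *v X + D *v \<xi>)))"

definition pairing :: "(real^'n) \<times> (real^'n) \<Rightarrow> (real^'n) \<times> (real^'n) \<Rightarrow> real" where
  "pairing u v = (case u of (X, \<xi>) \<Rightarrow> (case v of (Y, \<eta>) \<Rightarrow> (\<xi> \<bullet> Y + \<eta> \<bullet> X) / 2))"

definition eB :: "real^'n^'n \<Rightarrow> ('n::finite) gend" where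
  "eB K = (mat 1, 0, K, mat 1)"

definition Phi :: "real^'n^'n \<Rightarrow> ('n::finite) gend \<Rightarrow> 'n gend" where
  "Phi K JJ = gmult JJ (gmult (eB K) JJ) - gmult (gmult (eB K) JJ) JJ"

definition skew_form :: "real^'n^'n \<Rightarrow> bool" where
  "skew_form K \<longleftrightarrow> transpose K = - K"

definition gen_almost_complex :: "('n::finite) gend \<Rightarrow> bool" where
  "gen_almost_complex JJ \<longleftrightarrow> gmult JJ JJ = - gid \<and>
     (\<forall>u v. pairing (gapp JJ u) (gapp JJ v) = pairing u v)"

definition gen_almost_kahler :: "('n::finite) gend \<Rightarrow> 'n gend \<Rightarrow> bool" where
  "gen_almost_kahler J1 J2 \<longleftrightarrow> gen_almost_complex J1 \<and> gen_almost_complex J2 \<and>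
     gmult J1 J2 = gmult J2 J1 \<and>
     (\<forall>u. u \<noteq> 0 \<longrightarrow> pairing (gapp (- gmult J1 J2) u) u > 0)"

definition bihermitian :: "real^'n^'n \<Rightarrow> real^'n^'n \<Rightarrow> real^'n^'n \<Rightarrow> real^'n^'n \<Rightarrow> bool" where
  "bihermitian g b I J \<longleftrightarrow>
     transpose g = g \<and> (\<forall>v. v \<noteq> 0 \<longrightarrow> v \<bullet> (g *v v) > 0) \<and> skew_form b \<and>
     I ** I = - mat 1 \<and> J ** J = - mat 1 \<and>
     transpose I ** g ** I = g \<and> transpose J ** g ** J = g"

text \<open>Gualtieri map; s = 1 gives J_1, s = -1 gives J_2.\<close>
definition gualtieri :: "real \<Rightarrow> real^'n^'n \<Rightarrow> real^'n^'n \<Rightarrow> real^'n^'n \<Rightarrow> real^'n^'n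
    \<Rightarrow> ('n::finite) gend" where
  "gualtieri s g b I J =
     (1/2) *\<^sub>R gmult (eB b)
       (gmult (I + s *\<^sub>R J,
               - (matrix_inv (g ** I) - s *\<^sub>R matrix_inv (g ** J)),
               g ** I - s *\<^sub>R (g ** J),
               - (transpose I + s *\<^sub>R transpose J))
         (eB (- b)))"

definition sigma :: "real^'n^'n \<Rightarrow> real^'n^'n \<Rightarrow> real^'n^'n \<Rightarrow> real^'n^'n" where
  "sigma I J g = (1/2) *\<^sub>R ((I ** J - J ** I) ** matrix_inv g)"

end

theory Submission
  imports Defs
begin


lemma mm_radd: "((A::real^'n::finite^'m::finite) + B) ** (C::real^'p::finite^'n) = A ** C + B ** C"
  by (simp add: matrix_matrix_mult_def vec_eq_iff sum.distrib algebra_simps)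
lemma mm_ladd: "(A::real^'n::finite^'m::finite) ** (B + C) = A ** B + A ** (C::real^'p::finite^'n)"
  by (simp add: matrix_add_ldistrib)
lemma mm_rdiff: "((A::real^'n::finite^'m::finite) - B) ** (C::real^'p::finite^'n) = A ** C - B ** C"
  by (simp add: matrix_matrix_mult_def vec_eq_iff sum_subtractf algebra_simps)
lemma mm_ldiff: "(A::real^'n::finite^'m::finite) ** (B - C) = A ** B - A ** (C::real^'p::finite^'n)"
  by (simp add: matrix_matrix_mult_def vec_eq_iff sum_subtractf algebra_simps)
lemma mm_rneg: "(- (A::real^'n::finite^'m::finite)) ** (C::real^'p::finite^'n) = - (A ** C)"
  by (simp add: matrix_matrix_mult_def vec_eq_iff sum_negf)
lemma mm_lneg: "(A::real^'n::finite^'m::finite) ** (- (C::real^'p::finite^'n)) = - (A ** C)"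
  by (simp add: matrix_matrix_mult_def vec_eq_iff sum_negf)
lemma mm_rscale: "(c *\<^sub>R (A::real^'n::finite^'m::finite)) ** (C::real^'p::finite^'n) = c *\<^sub>R (A ** C)"
  by (simp add: scalar_matrix_assoc)
lemma mm_lscale: "(A::real^'n::finite^'m::finite) ** (c *\<^sub>R (C::real^'p::finite^'n)) = c *\<^sub>R (A ** C)"
  by (simp add: matrix_scalar_ac scalar_matrix_assoc)
lemma mm_rassoc: "((A::real^'n::finite^'m::finite) ** (B::real^'p::finite^'n)) ** (C::real^'q::finite^'p) = A ** (B ** C)"
  by (simp add: matrix_mul_assoc)

lemma vec_times_numeral: "(A::real^'n::finite^'m::finite) * numeral w = (numeral w :: real) *\<^sub>R A"
  by (simp add: vec_eq_iff)
lemma vec_numeral_times: "numeral w * (A::real^'n::finite^'m::finite) = (numeral w :: real) *\<^sub>R A"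
  by (simp add: vec_eq_iff)

lemmas msimps = vec_times_numeral vec_numeral_times mm_radd mm_ladd mm_rdiff mm_ldiff mm_rneg mm_lneg mm_rscale mm_lscale mm_rassoc

lemma bilinear_mmult: "bilinear (\<lambda>(A::real^'n::finite^'m::finite) (B::real^'p::finite^'n). A ** B)"
  unfolding bilinear_def linear_iff by (auto simp: msimps)

lemma bb_mmult: "bounded_bilinear (\<lambda>(A::real^'n::finite^'m::finite) (B::real^'p::finite^'n). A ** B)"
  using bilinear_mmult bilinear_conv_bounded_bilinear by blast

lemma gmult_blocks: "gmult (A,B,C,D) (A',B',C',D') = (A ** A' + B ** C', A ** B' + B ** D', C ** A' + D ** C', C ** B' + D ** D')"
  by (simp add: gmult_def)

lemma bilinear_gmult: "bilinear (gmult :: ('n::finite) gend \<Rightarrow> _)"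
  unfolding bilinear_def linear_iff
  by (auto simp: gmult_def split: prod.splits simp: msimps scaleR_add_right)

lemma bb_gmult: "bounded_bilinear (gmult :: ('n::finite) gend \<Rightarrow> _)"
  using bilinear_gmult bilinear_conv_bounded_bilinear by blast


lemma Phi_UL: "fst (Phi K (A,B,C,D)) = B ** (K ** A)"
  by (simp add: Phi_def gmult_def eB_def msimps)
lemma Phi_UR: "fst (snd (Phi K (A,B,C,D))) = B ** (K ** B)"
  by (simp add: Phi_def gmult_def eB_def msimps)
lemma Phi_LR: assumes "A ** B + B ** D = 0" shows "snd (snd (snd (Phi K (A,B,C,D)))) = D ** (K ** B)"
proof -
  have "K ** (A ** B + B ** D) = 0" using assms by simp
  then show ?thesis by (simp add: Phi_def gmult_def eB_def msimps algebra_simps)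
qed

lemma gualt_blocks: "gualtieri s g b I J =
  (let A = I + s *\<^sub>R J; B = - (matrix_inv (g ** I) - s *\<^sub>R matrix_inv (g ** J));
       C = g ** I - s *\<^sub>R (g ** J); D = - (transpose I + s *\<^sub>R transpose J) in
   ((1/2) *\<^sub>R (A - B ** b), (1/2) *\<^sub>R B, (1/2) *\<^sub>R (b ** (A - B ** b) + C - D ** b), (1/2) *\<^sub>R (b ** B + D)))"
  by (simp add: gualtieri_def gmult_def eB_def Let_def msimps algebra_simps)

lemma UR_gmult: "fst (snd (gmult X Y)) = fst X ** fst (snd Y) + fst (snd X) ** snd (snd (snd Y))"
  by (cases X; cases Y) (simp add: gmult_def)

lemma inv_unique: fixes A :: "real^'n::finite^'n" assumes "A ** X = mat 1" shows "matrix_inv A = X"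
proof -
  have "X ** A = mat 1" using assms matrix_left_right_inverse by blast
  then have inv: "invertible A" using assms invertible_def by blast
  have "A ** matrix_inv A = mat 1 \<and> matrix_inv A ** A = mat 1"
    unfolding matrix_inv_def by (rule someI_ex) (use assms \<open>X ** A = mat 1\<close> in blast)
  then have "X ** (A ** matrix_inv A) = X" by simp
  then show ?thesis by (simp add: matrix_mul_assoc \<open>X ** A = mat 1\<close>)
qed

lemma mm_cancel: "(A::real^'n::finite^'n) ** B = mat 1 \<Longrightarrow> A ** (B ** X) = X"
  by (simp add: matrix_mul_assoc)

lemma sq_neg: "(I::real^'n::finite^'n) ** I = - mat 1 \<Longrightarrow> I ** (I ** X) = - X"
  by (simp add: matrix_mul_assoc mm_rneg)

lemma point_facts:
  fixes g b I J :: "real^'n::finite^'n"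
  assumes bh: "bihermitian g b I J" and gi: "gi = matrix_inv g"
  shows "g ** gi = mat 1" "gi ** g = mat 1"
    "matrix_inv (g ** I) = - (I ** gi)" "matrix_inv (g ** J) = - (J ** gi)"
    "gi ** transpose I = - (I ** gi)" "gi ** transpose J = - (J ** gi)"
proof -
  have pd: "\<And>v. v \<noteq> 0 \<Longrightarrow> v \<bullet> (g *v v) > 0" and II: "I ** I = - mat 1" and JJ: "J ** J = - mat 1"
    and oI: "transpose I ** g ** I = g" and oJ: "transpose J ** g ** J = g"
    using bh unfolding bihermitian_def by auto
  have "\<forall>v. g *v v = 0 \<longrightarrow> v = 0" using pd by (metis inner_zero_right less_irrefl)
  then obtain B where B: "B ** g = mat 1" using matrix_left_invertible_ker by blast
  then have "g ** B = mat 1" using matrix_left_right_inverse by blast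
  then have gB: "gi = B" using inv_unique gi by blast
  show g1: "g ** gi = mat 1" "gi ** g = mat 1" using B gB \<open>g ** B = mat 1\<close> by auto
  show "matrix_inv (g ** I) = - (I ** gi)"
    by (rule inv_unique) (simp add: msimps sq_neg[OF II] g1 flip: matrix_mul_assoc)
  show "matrix_inv (g ** J) = - (J ** gi)"
    by (rule inv_unique) (simp add: msimps sq_neg[OF JJ] g1 flip: matrix_mul_assoc)
  have "transpose I ** g = - (g ** I)"
  proof -
    have "transpose I ** g ** I ** I = g ** I" using oI by simp
    then have "- (transpose I ** g) = g ** I" by (simp add: msimps II)
    then show ?thesis by (metis minus_minus)
  qed
  then have "gi ** (transpose I ** g) ** gi = - (gi ** (g ** I) ** gi)" by (simp add: msimps)
  then show "gi ** transpose I = - (I ** gi)" by (simp add: msimps g1 mm_cancel[OF g1(2)])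
  have "transpose J ** g = - (g ** J)"
  proof -
    have "transpose J ** g ** J ** J = g ** J" using oJ by simp
    then have "- (transpose J ** g) = g ** J" by (simp add: msimps JJ)
    then show ?thesis by (metis minus_minus)
  qed
  then have "gi ** (transpose J ** g) ** gi = - (gi ** (g ** J) ** gi)" by (simp add: msimps)
  then show "gi ** transpose J = - (J ** gi)" by (simp add: msimps g1 mm_cancel[OF g1(2)])
qed




lemma pt_UR:
  fixes g b I J :: "real^'n::finite^'n"
  assumes bh: "bihermitian g b I J" and gi: "gi = matrix_inv g"
  shows "fst (snd (gualtieri s g b I J)) = (1/2) *\<^sub>R (I ** gi - s *\<^sub>R (J ** gi))"
  using point_facts[OF bh gi] by (simp add: gualt_blocks Let_def algebra_simps)

lemma pt_URprod:
  fixes g b I J :: "real^'n::finite^'n"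
  assumes bh: "bihermitian g b I J" and gi: "gi = matrix_inv g"
  shows "fst (snd (gmult (gualtieri 1 g b I J) (gualtieri (-1) g b I J))) = - gi"
    "fst (snd (gmult (gualtieri (-1) g b I J) (gualtieri 1 g b I J))) = - gi"
proof -
  have II: "I ** I = - mat 1" and JJ: "J ** J = - mat 1" using bh unfolding bihermitian_def by auto
  note pf = point_facts[OF bh gi]
  have tI: "gi ** (transpose I ** X) = - (I ** (gi ** X))" for X :: "real^'n^'n"
    by (simp add: matrix_mul_assoc pf mm_rneg)
  have tJ: "gi ** (transpose J ** X) = - (J ** (gi ** X))" for X :: "real^'n^'n"
    by (simp add: matrix_mul_assoc pf mm_rneg)
  note rules = pf tI tJ sq_neg[OF II] sq_neg[OF JJ] II JJ
  show "fst (snd (gmult (gualtieri 1 g b I J) (gualtieri (-1) g b I J))) = - gi"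
    by (simp add: UR_gmult gualt_blocks Let_def msimps rules algebra_simps; simp add: vec_eq_iff)
  show "fst (snd (gmult (gualtieri (-1) g b I J) (gualtieri 1 g b I J))) = - gi"
    by (simp add: UR_gmult gualt_blocks Let_def msimps rules algebra_simps; simp add: vec_eq_iff)
qed


lemma tendsto_det:
  fixes Q :: "'a \<Rightarrow> real^'n::finite^'n"
  assumes "(Q \<longlongrightarrow> L) F"
  shows "((\<lambda>s. det (Q s)) \<longlongrightarrow> det L) F"
  unfolding det_def by (intro tendsto_intros assms)

lemma matrix_inv_cramer:
  fixes A :: "real^'n::finite^'n"
  assumes "invertible A"
  shows "matrix_inv A = (\<chi> i j. det (\<chi> r c. if c = i then (if r = j then 1 else 0) else A$r$c) / det A)"
proof -
  have AA0: "A ** matrix_inv A = mat 1 \<and> matrix_inv A ** A = mat 1"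
    unfolding matrix_inv_def by (rule someI_ex) (use assms in \<open>auto simp: invertible_def\<close>)
  then have AA: "A ** matrix_inv A = mat 1" by blast
  have d0: "det A \<noteq> 0" using assms invertible_det_nz by blast
  show ?thesis
  proof (subst vec_eq_iff, intro allI, subst vec_eq_iff, intro allI)
    fix i j
    define x where "x = (\<chi> k. matrix_inv A $ k $ j)"
    have "A *v x = (\<chi> r. if r = j then 1 else 0)"
    proof -
      have "A *v x = (\<chi> r. (A ** matrix_inv A) $ r $ j)"
        by (simp add: x_def matrix_vector_mult_def matrix_matrix_mult_def)
      then show ?thesis by (simp add: AA mat_def)
    qed
    then have "x = (\<chi> k. det(\<chi> i j'. if j'=k then (\<chi> r. if r = j then (1::real) else 0)$i else A$i$j') / det A)"
      using cramer[OF d0] by blast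
    then have "x $ i = det(\<chi> r c. if c = i then (if r = j then 1 else 0) else A$r$c) / det A"
      by (simp cong del: if_weak_cong)
    then show "matrix_inv A $ i $ j = (\<chi> i j. det (\<chi> r c. if c = i then (if r = j then 1 else 0) else A$r$c) / det A) $ i $ j"
      by (simp add: x_def)
  qed
qed

lemma tendsto_matrix_inv:
  fixes Q :: "'a \<Rightarrow> real^'n::finite^'n"
  assumes "(Q \<longlongrightarrow> L) F" "invertible L" "eventually (\<lambda>s. invertible (Q s)) F"
  shows "((\<lambda>s. matrix_inv (Q s)) \<longlongrightarrow> matrix_inv L) F"
proof -
  have d0: "det L \<noteq> 0" using assms invertible_det_nz by blast
  have "((\<lambda>s. (\<chi> i j. det (\<chi> r c. if c = i then (if r = j then 1 else 0) else Q s$r$c) / det (Q s)))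
     \<longlongrightarrow> (\<chi> i j. det (\<chi> r c. if c = i then (if r = j then 1 else 0) else L$r$c) / det L)) F"
    apply (intro tendsto_intros tendsto_det assms d0)
    subgoal for i j r c by (cases "c = i") (auto intro!: tendsto_intros assms)
    done
  then have "((\<lambda>s. (\<chi> i j. det (\<chi> r c. if c = i then (if r = j then 1 else 0) else Q s$r$c) / det (Q s)))
     \<longlongrightarrow> matrix_inv L) F"
    by (simp add: matrix_inv_cramer[OF assms(2)])
  then show ?thesis
    by (rule Lim_transform_eventually) (use assms(3) in \<open>auto elim: eventually_mono simp: matrix_inv_cramer\<close>)
qed

lemma deriv_cont_mult:
  fixes F D :: "real \<Rightarrow> real^'n::finite^'n"
  assumes Ft: "(F \<longlongrightarrow> F t) (at t within T)" and dD: "(D has_vector_derivative D') (at t within T)"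
    and D0: "D t = 0"
  shows "((\<lambda>s. F s ** D s) has_vector_derivative (F t ** D')) (at t within T)"
proof -
  define e where "e y = (1 / norm (y - t)) *\<^sub>R (D y - (D t + (y - t) *\<^sub>R D'))" for y
  have e0: "(e \<longlongrightarrow> 0) (at t within T)"
    using dD unfolding has_vector_derivative_def has_derivative_within e_def by blast
  have eq: "(1 / norm (y - t)) *\<^sub>R (F y ** D y - (F t ** D t + (y - t) *\<^sub>R (F t ** D')))
      = F y ** e y + ((y - t) / norm (y - t)) *\<^sub>R ((F y - F t) ** D')" for y
    by (simp add: e_def D0 msimps scaleR_diff_right scaleR_scaleR)
  have l1: "((\<lambda>y. F y ** e y) \<longlongrightarrow> F t ** 0) (at t within T)"
    by (rule bounded_bilinear.tendsto[OF bb_mmult Ft e0])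
  have l2: "((\<lambda>y. (F y - F t) ** D') \<longlongrightarrow> (F t - F t) ** D') (at t within T)"
    by (rule bounded_bilinear.tendsto[OF bb_mmult tendsto_diff[OF Ft tendsto_const] tendsto_const])
  have l2': "((\<lambda>y. ((y - t) / norm (y - t)) *\<^sub>R ((F y - F t) ** D')) \<longlongrightarrow> 0) (at t within T)"
  proof (rule Lim_null_comparison)
    show "\<forall>\<^sub>F y in at t within T. norm (((y - t) / norm (y - t)) *\<^sub>R ((F y - F t) ** D')) \<le> norm ((F y - F t) ** D')"
      by (intro always_eventually allI) (simp add: divide_le_eq_1)
    show "((\<lambda>y. norm ((F y - F t) ** D')) \<longlongrightarrow> 0) (at t within T)"
      using tendsto_norm[OF l2] by simp
  qed
  have "((\<lambda>y. (1 / norm (y - t)) *\<^sub>R (F y ** D y - (F t ** D t + (y - t) *\<^sub>R (F t ** D')))) \<longlongrightarrow> 0) (at t within T)"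
    unfolding eq using tendsto_add[OF l1 l2'] by simp
  moreover have "bounded_linear (\<lambda>h. h *\<^sub>R (F t ** D'))"
    by (simp add: bounded_linear_scaleR_left)
  ultimately show ?thesis
    unfolding has_vector_derivative_def has_derivative_within by blast
qed

lemma inv_deriv:
  fixes Q G :: "real \<Rightarrow> real^'n::finite^'n"
  assumes dQ: "(Q has_vector_derivative Q') (at t within T)" and tT: "t \<in> T"
    and inv: "\<And>s. s \<in> T \<Longrightarrow> Q s ** G s = mat 1 \<and> G s ** Q s = mat 1"
    and Gt: "(G \<longlongrightarrow> G t) (at t within T)"
  shows "(G has_vector_derivative - (G t ** (Q' ** G t))) (at t within T)"
proof -
  have dD: "((\<lambda>s. (Q s - Q t) ** G t) has_vector_derivative (Q' ** G t)) (at t within T)"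
    using bounded_bilinear.has_vector_derivative[OF bb_mmult has_vector_derivative_diff[OF dQ has_vector_derivative_const] has_vector_derivative_const]
    by simp
  have d2: "((\<lambda>s. G t - G s ** ((Q s - Q t) ** G t)) has_vector_derivative (0 - G t ** (Q' ** G t))) (at t within T)"
    by (intro has_vector_derivative_diff has_vector_derivative_const deriv_cont_mult[OF Gt dD]) simp
  show ?thesis
  proof (rule has_vector_derivative_transform[OF tT _ d2[simplified]])
    fix s assume s: "s \<in> T"
    have "G s ** ((Q s - Q t) ** G t) = G t - G s"
      using inv[OF s] inv[OF tT] by (simp add: msimps mm_cancel)
    then show "G s = G t - G s ** ((Q s - Q t) ** G t)" by simp
  qed
qed



lemma comm_UR:
  assumes "A1**B1 + B1**D1 = 0" "A2**B2 + B2**D2 = 0" "X = A1**B2 + B1**D2"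
  shows "fst (snd (gmult (A1,B1,C1,D1) (Phi K (A2,B2,C2,D2)) + gmult (Phi K (A1,B1,C1,D1)) (A2,B2,C2,D2)))
     = B1 ** (K ** X) + X ** (K ** B2)"
  using assms by (simp add: UR_gmult Phi_UL Phi_UR Phi_LR msimps)

lemma core_alg:
  fixes g b I J K gi B1 B2 :: "real^'n::finite^'n"
  assumes bh: "bihermitian g b I J" and gi: "gi = matrix_inv g"
    and B1: "B1 = (1/2) *\<^sub>R (I**gi - J**gi)" and B2: "B2 = (1/2) *\<^sub>R (I**gi + J**gi)"
    and cons: "B1 ** (K ** (-gi)) + (-gi) ** (K ** B2) - (B2 ** (K ** (-gi)) + (-gi) ** (K ** B1)) = 0"
  shows "J ** (gi ** K) = gi ** (K ** J)"
    "(B1 ** (K ** B1) + B2 ** (K ** B2)) ** g + (B1 + B2) ** (-(g ** ((-(B1 ** (K ** (-gi)) + (-gi) ** (K ** B2))) ** g))) = 0"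
    "I ** (B2**(K**B2) - B1**(K**B1)) + (B2**(K**B2) - B1**(K**B1)) ** transpose I = 0"
proof -
  have II: "I ** I = - mat 1" and JJ: "J ** J = - mat 1" using bh unfolding bihermitian_def by auto
  note pf = point_facts[OF bh gi]
  have tI: "gi ** (transpose I ** X) = - (I ** (gi ** X))" for X :: "real^'n^'n"
    by (simp add: matrix_mul_assoc pf mm_rneg)
  have tJ: "gi ** (transpose J ** X) = - (J ** (gi ** X))" for X :: "real^'n^'n"
    by (simp add: matrix_mul_assoc pf mm_rneg)
  note rules = pf tI tJ sq_neg[OF II] sq_neg[OF JJ] II JJ mm_cancel[OF pf(1)] mm_cancel[OF pf(2)]
  have c1: "J ** (gi ** (K ** gi)) = gi ** (K ** (J ** gi))"
    using cons by (simp add: B1 B2 msimps rules algebra_simps)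
  then have "J ** (gi ** (K ** gi)) ** g = gi ** (K ** (J ** gi)) ** g" by simp
  then show C: "J ** (gi ** K) = gi ** (K ** J)" by (simp add: msimps rules)
  have C': "gi ** (K ** (J ** X)) = J ** (gi ** (K ** X))" for X :: "real^'n^'n"
    by (metis C matrix_mul_assoc)
  show "(B1 ** (K ** B1) + B2 ** (K ** B2)) ** g + (B1 + B2) ** (-(g ** ((-(B1 ** (K ** (-gi)) + (-gi) ** (K ** B2))) ** g))) = 0"
    by (simp add: B1 B2 msimps rules C' algebra_simps)
  show "I ** (B2**(K**B2) - B1**(K**B1)) + (B2**(K**B2) - B1**(K**B1)) ** transpose I = 0"
    by (simp add: B1 B2 msimps rules C' algebra_simps)
qed

lemma sigma_alt:
  fixes g b I J :: "real^'n::finite^'n"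
  assumes bh: "bihermitian g b I J" and gi: "gi = matrix_inv g"
  shows "sigma I J g = (1/2) *\<^sub>R (I ** (J ** gi) + (J ** gi) ** transpose I)"
  using point_facts[OF bh gi] gi by (simp add: sigma_def msimps algebra_simps)



lemma bl_UR: "bounded_linear (\<lambda>X::('n::finite) gend. fst (snd X))"
  by (intro bounded_linear_compose[OF bounded_linear_fst] bounded_linear_snd)

theorem corollary1p3:
  fixes J1 J2 :: "'m \<Rightarrow> real \<Rightarrow> ('n::finite) gend"
    and g b I J K :: "'m \<Rightarrow> real \<Rightarrow> real^'n^'n"
    and T :: "real set"
  assumes "is_interval T" and "0 \<in> T"
    and "\<forall>x. \<forall>t\<in>T. gen_almost_kahler (J1 x t) (J2 x t)"
    and "\<forall>x. \<forall>t\<in>T. bihermitian (g x t) (b x t) (I x t) (J x t)"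
    and "\<forall>x. \<forall>t\<in>T. J1 x t = gualtieri 1 (g x t) (b x t) (I x t) (J x t)
                    \<and> J2 x t = gualtieri (-1) (g x t) (b x t) (I x t) (J x t)"
    and "\<forall>x. \<forall>t\<in>T. skew_form (K x t)"
    and "\<forall>x. \<forall>t\<in>T. ((\<lambda>s. J1 x s) has_vector_derivative Phi (K x t) (J1 x t)) (at t within T)"
    and "\<forall>x. \<forall>t\<in>T. ((\<lambda>s. J2 x s) has_vector_derivative Phi (K x t) (J2 x t)) (at t within T)"
  shows "\<forall>x. \<forall>t\<in>T. I x t = I x 0 \<and>
           sigma (I x t) (J x t) (g x t) = sigma (I x 0) (J x 0) (g x 0)"
proof (intro allI ballI)
  fix x t assume tT: "t \<in> T"
  show "I x t = I x 0 \<and> sigma (I x t) (J x t) (g x t) = sigma (I x 0) (J x 0) (g x 0)"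
  proof (cases "T = {0}")
    case True
    then have "t = 0" using tT by auto
    then show ?thesis by simp
  next
    case False
    have conv: "convex T" using assms(1) is_interval_convex by blast
    have nbot: "at s within T \<noteq> bot" if "s \<in> T" for s
    proof -
      have "s islimpt T"
        by (rule connected_imp_perfect[OF is_interval_connected[OF assms(1)] that]) (use False assms(2) in auto)
      then show ?thesis using trivial_limit_within by blast
    qed
    have evT: "\<forall>\<^sub>F s in at u within T. s \<in> T" for u
      by (simp add: eventually_at_filter)
    define gi where "gi s = matrix_inv (g x s)" for s
    define U1 where "U1 s = fst (snd (J1 x s))" for s
    define U2 where "U2 s = fst (snd (J2 x s))" for s
    define Q where "Q s = - fst (snd (gmult (J1 x s) (J2 x s)))" for s
    have bh: "bihermitian (g x s) (b x s) (I x s) (J x s)" if "s \<in> T" for s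
      using assms(4) that by blast
    have U1v: "U1 s = (1/2) *\<^sub>R (I x s ** gi s - J x s ** gi s)" if "s \<in> T" for s
      using pt_UR[OF bh[OF that] gi_def, of 1] assms(5) that by (simp add: U1_def)
    have U2v: "U2 s = (1/2) *\<^sub>R (I x s ** gi s + J x s ** gi s)" if "s \<in> T" for s
      using pt_UR[OF bh[OF that] gi_def, of "-1"] assms(5) that by (simp add: U2_def)
    have Qv: "Q s = gi s" if "s \<in> T" for s
      using pt_URprod(1)[OF bh[OF that] gi_def] assms(5) that by (simp add: Q_def)
    have pf: "g x s ** gi s = mat 1" "gi s ** g x s = mat 1" if "s \<in> T" for s
      using point_facts[OF bh[OF that] gi_def] by auto
    have local: "((\<lambda>s. I x s) has_vector_derivative 0) (at u within T) \<and>
        (\<forall>I0. I0 = I x u \<longrightarrow> ((\<lambda>s. (1/2) *\<^sub>R (I0 ** (U2 s - U1 s) + (U2 s - U1 s) ** transpose I0)) has_vector_derivative 0) (at u within T))"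
      if uT: "u \<in> T" for u
    proof -
      obtain A1 B1 C1 D1 where j1: "J1 x u = (A1,B1,C1,D1)" by (cases "J1 x u") auto
      obtain A2 B2 C2 D2 where j2: "J2 x u = (A2,B2,C2,D2)" by (cases "J2 x u") auto
      have gak: "gen_almost_kahler (J1 x u) (J2 x u)" using assms(3) uT by blast
      have sq1: "A1**B1 + B1**D1 = 0"
      proof -
        have "gmult (J1 x u) (J1 x u) = - gid" using gak unfolding gen_almost_kahler_def gen_almost_complex_def by blast
        then show ?thesis by (simp add: j1 gmult_def gid_def)
      qed
      have sq2: "A2**B2 + B2**D2 = 0"
      proof -
        have "gmult (J2 x u) (J2 x u) = - gid" using gak unfolding gen_almost_kahler_def gen_almost_complex_def by blast
        then show ?thesis by (simp add: j2 gmult_def gid_def)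
      qed
      have jj: "J1 x u = gualtieri 1 (g x u) (b x u) (I x u) (J x u)"
         "J2 x u = gualtieri (-1) (g x u) (b x u) (I x u) (J x u)" using assms(5) uT by auto
      have X12: "A1**B2 + B1**D2 = - gi u"
        using pt_URprod(1)[OF bh[OF uT] gi_def, folded jj] by (simp add: j1 j2 gmult_def)
      have X21: "A2**B1 + B2**D1 = - gi u"
        using pt_URprod(2)[OF bh[OF uT] gi_def, folded jj] by (simp add: j1 j2 gmult_def)
      have B1v: "B1 = (1/2) *\<^sub>R (I x u ** gi u - J x u ** gi u)" using U1v[OF uT] by (simp add: U1_def j1)
      have B2v: "B2 = (1/2) *\<^sub>R (I x u ** gi u + J x u ** gi u)" using U2v[OF uT] by (simp add: U2_def j2)
      define P1 where "P1 = Phi (K x u) (J1 x u)"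
      define P2 where "P2 = Phi (K x u) (J2 x u)"
      have d1: "((\<lambda>s. J1 x s) has_vector_derivative P1) (at u within T)" using assms(7) uT P1_def by blast
      have d2: "((\<lambda>s. J2 x s) has_vector_derivative P2) (at u within T)" using assms(8) uT P2_def by blast
      have dU1: "(U1 has_vector_derivative B1 ** (K x u ** B1)) (at u within T)"
        using bounded_linear.has_vector_derivative[OF bl_UR d1]
        by (simp add: U1_def[abs_def] P1_def j1 Phi_UR)
      have dU2: "(U2 has_vector_derivative B2 ** (K x u ** B2)) (at u within T)"
        using bounded_linear.has_vector_derivative[OF bl_UR d2]
        by (simp add: U2_def[abs_def] P2_def j2 Phi_UR)
      have dP12: "((\<lambda>s. gmult (J1 x s) (J2 x s)) has_vector_derivative (gmult (J1 x u) P2 + gmult P1 (J2 x u))) (at u within T)"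
        by (rule bounded_bilinear.has_vector_derivative[OF bb_gmult d1 d2])
      have dP21: "((\<lambda>s. gmult (J2 x s) (J1 x s)) has_vector_derivative (gmult (J2 x u) P1 + gmult P2 (J1 x u))) (at u within T)"
        by (rule bounded_bilinear.has_vector_derivative[OF bb_gmult d2 d1])
      have dC: "((\<lambda>s. gmult (J1 x s) (J2 x s) - gmult (J2 x s) (J1 x s)) has_vector_derivative
          ((gmult (J1 x u) P2 + gmult P1 (J2 x u)) - (gmult (J2 x u) P1 + gmult P2 (J1 x u)))) (at u within T)"
        by (rule has_vector_derivative_diff[OF dP12 dP21])
      have dC0: "((\<lambda>s. gmult (J1 x s) (J2 x s) - gmult (J2 x s) (J1 x s)) has_vector_derivative 0) (at u within T)"
      proof (rule has_vector_derivative_transform[OF uT _ has_vector_derivative_const])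
        fix s assume "s \<in> T"
        then have "gmult (J1 x s) (J2 x s) = gmult (J2 x s) (J1 x s)"
          using assms(3) unfolding gen_almost_kahler_def by blast
        then show "gmult (J1 x s) (J2 x s) - gmult (J2 x s) (J1 x s) = 0" by simp
      qed
      have eqP: "gmult (J1 x u) P2 + gmult P1 (J2 x u) = gmult (J2 x u) P1 + gmult P2 (J1 x u)"
        using vector_derivative_unique_within[OF nbot[OF uT] dC dC0] by simp
      have UR12: "fst (snd (gmult (J1 x u) P2 + gmult P1 (J2 x u))) = B1 ** (K x u ** (- gi u)) + (- gi u) ** (K x u ** B2)"
        unfolding P1_def P2_def j1 j2 by (rule comm_UR[OF sq1 sq2 X12[symmetric]])
      have UR21: "fst (snd (gmult (J2 x u) P1 + gmult P2 (J1 x u))) = B2 ** (K x u ** (- gi u)) + (- gi u) ** (K x u ** B1)"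
        unfolding P1_def P2_def j1 j2 by (rule comm_UR[OF sq2 sq1 X21[symmetric]])
      have cons: "B1 ** (K x u ** (-gi u)) + (-gi u) ** (K x u ** B2) - (B2 ** (K x u ** (-gi u)) + (-gi u) ** (K x u ** B1)) = 0"
        using eqP UR12 UR21 by simp
      note core = core_alg[OF bh[OF uT] gi_def B1v B2v cons]
      define Q' where "Q' = - (B1 ** (K x u ** (- gi u)) + (- gi u) ** (K x u ** B2))"
      have dQ: "(Q has_vector_derivative Q') (at u within T)"
        using has_vector_derivative_minus[OF bounded_linear.has_vector_derivative[OF bl_UR dP12]]
        unfolding UR12 Q_def[abs_def] Q'_def .
      have inv: "Q s ** g x s = mat 1 \<and> g x s ** Q s = mat 1" if "s \<in> T" for s
        using pf[OF that] Qv[OF that] by simp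
      have Qt: "(Q \<longlongrightarrow> Q u) (at u within T)"
        using has_vector_derivative_continuous[OF dQ] by (simp add: continuous_within)
      have invQ: "invertible (Q u)" using inv[OF uT] invertible_def by blast
      have Gt: "((\<lambda>s. g x s) \<longlongrightarrow> g x u) (at u within T)"
      proof -
        have "((\<lambda>s. matrix_inv (Q s)) \<longlongrightarrow> matrix_inv (Q u)) (at u within T)"
          by (rule tendsto_matrix_inv[OF Qt invQ]) (rule eventually_mono[OF evT], use inv invertible_def in blast)
        moreover have "matrix_inv (Q s) = g x s" if "s \<in> T" for s
          using inv[OF that] inv_unique by blast
        ultimately show ?thesis
          using uT by (auto intro: Lim_transform_eventually eventually_mono[OF evT])
      qed
      have dG: "((\<lambda>s. g x s) has_vector_derivative - (g x u ** (Q' ** g x u))) (at u within T)"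
        by (rule inv_deriv[OF dQ uT inv Gt])
      have dI': "((\<lambda>s. (U1 s + U2 s) ** g x s) has_vector_derivative
          ((U1 u + U2 u) ** (- (g x u ** (Q' ** g x u))) + (B1 ** (K x u ** B1) + B2 ** (K x u ** B2)) ** g x u)) (at u within T)"
        by (rule bounded_bilinear.has_vector_derivative[OF bb_mmult has_vector_derivative_add[OF dU1 dU2] dG])
      have U12u: "U1 u + U2 u = B1 + B2" by (simp add: U1_def U2_def j1 j2)
      have z1: "(U1 u + U2 u) ** (- (g x u ** (Q' ** g x u))) + (B1 ** (K x u ** B1) + B2 ** (K x u ** B2)) ** g x u = 0"
        using core(2) unfolding U12u Q'_def by (simp add: add.commute mm_rassoc)
      have dI: "((\<lambda>s. I x s) has_vector_derivative 0) (at u within T)"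
      proof (rule has_vector_derivative_transform[OF uT _ dI'[unfolded z1]])
        fix s assume sT: "s \<in> T"
        have "U1 s + U2 s = I x s ** gi s" unfolding U1v[OF sT] U2v[OF sT]
          by (simp add: vec_eq_iff field_simps)
        then show "I x s = (U1 s + U2 s) ** g x s" by (simp add: mm_rassoc pf[OF sT])
      qed
      have dW: "((\<lambda>s. U2 s - U1 s) has_vector_derivative (B2 ** (K x u ** B2) - B1 ** (K x u ** B1))) (at u within T)"
        by (rule has_vector_derivative_diff[OF dU2 dU1])
      have dS: "((\<lambda>s. (1/2) *\<^sub>R (I x u ** (U2 s - U1 s) + (U2 s - U1 s) ** transpose (I x u))) has_vector_derivative
           (1/2) *\<^sub>R (I x u ** (B2 ** (K x u ** B2) - B1 ** (K x u ** B1)) + 0 ** (U2 u - U1 u)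
             + ((U2 u - U1 u) ** 0 + (B2 ** (K x u ** B2) - B1 ** (K x u ** B1)) ** transpose (I x u)))) (at u within T)"
        by (rule bounded_linear.has_vector_derivative[OF bounded_linear_scaleR_right
             has_vector_derivative_add[OF bounded_bilinear.has_vector_derivative[OF bb_mmult has_vector_derivative_const dW]
               bounded_bilinear.has_vector_derivative[OF bb_mmult dW has_vector_derivative_const]]])
      have "((\<lambda>s. (1/2) *\<^sub>R (I x u ** (U2 s - U1 s) + (U2 s - U1 s) ** transpose (I x u))) has_vector_derivative 0) (at u within T)"
        using dS core(3) by (simp add: add.assoc)
      then show ?thesis using dI by blast
    qed
    have Iconst: "I x s = I x 0" if "s \<in> T" for s
    proof (rule has_derivative_zero_unique[OF conv _ that assms(2)])
      fix r assume "r \<in> T"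
      then show "((\<lambda>s. I x s) has_derivative (\<lambda>h. 0)) (at r within T)"
        using local[of r] by (simp add: has_vector_derivative_def)
    qed
    define S where "S s = (1/2) *\<^sub>R (I x 0 ** (U2 s - U1 s) + (U2 s - U1 s) ** transpose (I x 0))" for s
    have Sv: "sigma (I x s) (J x s) (g x s) = S s" if sT: "s \<in> T" for s
    proof -
      have "U2 s - U1 s = J x s ** gi s" unfolding U1v[OF sT] U2v[OF sT]
        by (simp add: vec_eq_iff field_simps)
      then show ?thesis using sigma_alt[OF bh[OF sT] gi_def] Iconst[OF sT] by (simp add: S_def)
    qed
    have Sconst: "S t = S 0"
    proof (rule has_derivative_zero_unique[OF conv _ tT assms(2)])
      fix r assume rT: "r \<in> T"
      have "((\<lambda>s. S s) has_vector_derivative 0) (at r within T)"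
        using local[OF rT] Iconst[OF rT] unfolding S_def by auto
      then show "(S has_derivative (\<lambda>h. 0)) (at r within T)"
        by (simp add: has_vector_derivative_def)
    qed
    show ?thesis using Iconst[OF tT] Sconst Sv[OF tT] Sv[OF assms(2)] by simp
  qed
qed


end
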